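(* Let $\sigma\in S_V$ be a valid composite state of $\mathcal{M}uddy\mathcal{P}uzzle$ with $\sigma\notin S_0$, and let $N=|M|$ where $M=\bigcup_{k}\mathit{Obs}(\sigma_k)$. Then for every component $i$ of $\sigma$ which is a running state $\sigma_i=\langle\mathit{Obs}_i,r_i,s_i\rangle$: (1) if $s_i=u$, then $r_i<|\mathit{Obs}_i|$ (and $|\mathit{Obs}_i|\le N$); (2) if $s_i=m$, then $r_i=N-1=|\mathit{Obs}_i|$; (3) if $s_i=c$, then $r_i=N=|\mathit{Obs}_i|$.
   Context: Fix $n \ge 1$ children indexed $1,\dots,n$. A message is a triple $\langle j, r, s\rangle$ with $j \in \{1,\dots,n\}$ (the sender), $r \in \mathbb{N}$ (a round number) and $s \in \{u,m,c\}$ (epistemic status: $u$ = "does not know own status", $m$ = "knows they are muddy", $c$ = "knows they are clean"); $\bot$ denotes "no message". Child $i$ is a VLSM $\mathcal{C}_i$ with labels $\{\mathit{init},\mathit{emit},\mathit{receive}\}$, no initial messages, initial states $\langle \mathit{Obs}\rangle$ with $\mathit{Obs}\subseteq\{1,\dots,n\}$, and running states $\langle \mathit{Obs}, r, s\rangle$ with $\mathit{Obs}\subseteq\{1,\dots,n\}$, $r\in\mathbb{N}$, $s\in\{u,m,c\}$; $\mathit{Obs}(\cdot)$ denotes the observation set of either kind of state. Transitions $\tau_i$ and local validity $\beta_i$: - init: enabled only on an initial state $\langle\mathit{Obs}\rangle$ with input $\bot$; goes to $\langle \mathit{Obs},0,u\rangle$ if $\mathit{Obs}\ne\emptyset$ and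 to $\langle\mathit{Obs},0,m\rangle$ if $\mathit{Obs}=\emptyset$; output $\bot$. - emit: enabled only on a running state $\langle\mathit{Obs},r,s\rangle$ with input $\bot$; state unchanged, output $\langle i,r,s\rangle$. - receive: on a running state $\langle\mathit{Obs},r,s\rangle$ with input message $\langle j,r',s'\rangle$, output $\bot$, new state given by the first applicable case: (R1) $s\in\{m,c\}$: unchanged. Otherwise $s=u$ and: (R2) $s'=c$, $j\notin\mathit{Obs}$, $r'=|\mathit{Obs}|$: $\langle\mathit{Obs},r',c\rangle$; (R3) $s'=c$, $j\notin\mathit{Obs}$, $r'=|\mathit{Obs}|+1$: $\langle\mathit{Obs},r'-1,m\rangle$; (R4) $s'=m$, $j\in\mathit{Obs}$, $r'=|\mathit{Obs}|$: $\langle\mathit{Obs},r',m\rangle$; (R5) $s'=m$, $j\in\mathit{Obs}$, $r'=|\mathit{Obs}|-1$: $\langle\mathit{Obs},r'+1,c\rangle$; (R6) $s'=u$, $j\in\mathit{Obs}$, $r'<r$: unchanged; (R7) $s'=u$, $j\in\mathit{Obs}$, $r\le r'<|\mathit{Obs}|-1$: $\langle\mathit{Obs},r'+1,u\rangle$; (R8) $s'=u$, $j\in\mathit{Obs}$, $r'=|\mathit{Obs}|-1$: $\langle\mathit{Obs},r'+1,m\rangle$; (R9) $s'=u$, $j\notin\mathit{Obs}$, $r'\le r$: unchanged; (R10) $s'=u$, $j\notin\mathit{Obs}$, $r<r'<|\mathit{Obs}|$: $\langle\mathit{Obs},r',u\rangle$; (R11) $s'=u$, $j\notin\mathit{Obs}$,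 $r'=|\mathit{Obs}|$: $\langle\mathit{Obs},r',m\rangle$. $\beta_i$ for receive holds exactly when one of (R1)–(R11) applies. Composition $\mathcal{M}uddy\mathcal{P}uzzle=(\mathcal{C}_1+\dots+\mathcal{C}_n)|_\varphi$: composite states are tuples $\sigma=(\sigma_1,\dots,\sigma_n)$; composite initial states ($S_0$) are those with every component initial; labels are pairs $(i,l)$; transition $(i,l)$ with input $\mu$ applies $\tau_i(l,\sigma_i,\mu)$ to component $i$, leaves the others unchanged, and is allowed iff $\beta_i(l,\sigma_i,\mu)\wedge\varphi((i,l),\sigma,\mu)$. For a composite state $\sigma$ let $M=\bigcup_{i}\mathit{Obs}(\sigma_i)$; $\mathbf{consistent}(\sigma)$ means $M\ne\emptyset$ and $\mathit{Obs}(\sigma_i)=M\setminus\{i\}$ for all $i$. The composition constraint: $\varphi((i,\mathit{init}),\sigma,\mu)=\mathbf{consistent}(\sigma)$; $\varphi((i,\mathit{emit}),\sigma,\mu)=\text{true}$; $\varphi((i,\mathit{receive}),\sigma,\langle j,r',s'\rangle)$ holds iff $\sigma_j$ is a running state $\langle \mathit{Obs}_j,r_j,s_j\rangle$ and $(s'=s_j\wedge r'=r_j)\vee(s'=u\wedge r'<r_j)$. Validity (VLSM sense): a transition is constrained if its input satisfies the constraint. Valid traces and valid messages are defined by simultaneous induction: a valid trace is a finite sequence of constrained transitions starting in a composite initial state in which every input message is either $\bot$ or a valid message; a valid message is one output by some transition of some valid trace. A valid state is one reachable by a valid trace; $S_V$ is the set of valid states and $S_V^\ast=S_V\setminus S_0$.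 *)

theory Defs
  imports Main
begin

datatype status = U | Mu | Cl   (* u: unknown, m: knows muddy, c: knows clean *)

(* message <j, r, s> : sender j, round r, status s *)
type_synonym message = "nat \<times> nat \<times> status"

datatype cstate = Init "nat set" | Run "nat set" nat status

datatype label = LInit | LEmit | LReceive

fun obs :: "cstate \<Rightarrow> nat set" where
  "obs (Init Ob) = Ob"
| "obs (Run Ob r s) = Ob"

(* receive transition; None means that none of (R1)-(R11) applies (beta fails) *)
fun recv :: "cstate \<Rightarrow> message \<Rightarrow> cstate option" where
  "recv (Init Ob) m = None"
| "recv (Run Ob r s) (j, r', s') =
    (if s \<noteq> U then Some (Run Ob r s)
     else if s' = Cl \<and> j \<notin> Ob \<and> r' = card Ob then Some (Run Ob r' Cl)
     else if s' = Cl \<and> j \<notin> Ob \<and> r' = card Ob + 1 then Some (Run Ob (r' - 1) Mu)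
     else if s' = Mu \<and> j \<in> Ob \<and> r' = card Ob then Some (Run Ob r' Mu)
     else if s' = Mu \<and> j \<in> Ob \<and> r' + 1 = card Ob then Some (Run Ob (r' + 1) Cl)
     else if s' = U \<and> j \<in> Ob \<and> r' < r then Some (Run Ob r s)
     else if s' = U \<and> j \<in> Ob \<and> r \<le> r' \<and> r' + 1 < card Ob then Some (Run Ob (r' + 1) U)
     else if s' = U \<and> j \<in> Ob \<and> r' + 1 = card Ob then Some (Run Ob (r' + 1) Mu)
     else if s' = U \<and> j \<notin> Ob \<and> r' \<le> r then Some (Run Ob r s)
     else if s' = U \<and> j \<notin> Ob \<and> r < r' \<and> r' < card Ob then Some (Run Ob r' U)
     else if s' = U \<and> j \<notin> Ob \<and> r' = card Ob then Some (Run Ob r' Mu)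
     else None)"

(* transition of child i combined with its local validity beta_i:
   Some (new state, output) if beta_i holds, None otherwise *)
fun child_step :: "nat \<Rightarrow> label \<Rightarrow> cstate \<Rightarrow> message option \<Rightarrow> (cstate \<times> message option) option" where
  "child_step i LInit (Init Ob) None = Some (Run Ob 0 (if Ob = {} then Mu else U), None)"
| "child_step i LEmit (Run Ob r s) None = Some (Run Ob r s, Some (i, r, s))"
| "child_step i LReceive st (Some m) = map_option (\<lambda>st'. (st', None)) (recv st m)"
| "child_step i l st mu = None"

(* composite states: functions nat => cstate, components 1..n meaningful *)
type_synonym cstates = "nat \<Rightarrow> cstate"

definition composite_initial :: "nat \<Rightarrow> cstates \<Rightarrow> bool" where
  "composite_initial n \<sigma> \<longleftrightarrow>
     (\<forall>i\<in>{1..n}. \<exists>Ob. Ob \<subseteq> {1..n} \<and> \<sigma> i = Init Ob) \<and>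
     (\<forall>i. i \<notin> {1..n} \<longrightarrow> \<sigma> i = Init {})"

definition Mset :: "nat \<Rightarrow> cstates \<Rightarrow> nat set" where
  "Mset n \<sigma> = (\<Union>i\<in>{1..n}. obs (\<sigma> i))"

definition consistent :: "nat \<Rightarrow> cstates \<Rightarrow> bool" where
  "consistent n \<sigma> \<longleftrightarrow> Mset n \<sigma> \<noteq> {} \<and> (\<forall>i\<in>{1..n}. obs (\<sigma> i) = Mset n \<sigma> - {i})"

fun phi :: "nat \<Rightarrow> label \<Rightarrow> cstates \<Rightarrow> message option \<Rightarrow> bool" where
  "phi n LInit \<sigma> mu = consistent n \<sigma>"
| "phi n LEmit \<sigma> mu = True"
| "phi n LReceive \<sigma> (Some (j, r', s')) =
     (j \<in> {1..n} \<and>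
      (case \<sigma> j of
         Run Obj rj sj \<Rightarrow> (s' = sj \<and> r' = rj) \<or> (s' = U \<and> r' < rj)
       | Init Obj \<Rightarrow> False))"
| "phi n LReceive \<sigma> None = False"

definition ctrans :: "nat \<Rightarrow> nat \<Rightarrow> label \<Rightarrow> cstates \<Rightarrow> message option \<Rightarrow> (cstates \<times> message option) option" where
  "ctrans n i l \<sigma> mu =
     (if i \<in> {1..n} \<and> phi n l \<sigma> mu then
        map_option (\<lambda>(st', out). (\<sigma>(i := st'), out)) (child_step i l (\<sigma> i) mu)
      else None)"

inductive valid_state :: "nat \<Rightarrow> cstates \<Rightarrow> bool"
  and valid_msg :: "nat \<Rightarrow> message \<Rightarrow> bool" for n where
  vs_init: "composite_initial n \<sigma> \<Longrightarrow> valid_state n \<sigma>"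
| vs_step: "\<lbrakk>valid_state n \<sigma>; mu = None \<or> (\<exists>m. mu = Some m \<and> valid_msg n m);
             ctrans n i l \<sigma> mu = Some (\<sigma>', out)\<rbrakk> \<Longrightarrow> valid_state n \<sigma>'"
| vm_out: "\<lbrakk>valid_state n \<sigma>; mu = None \<or> (\<exists>m. mu = Some m \<and> valid_msg n m);
             ctrans n i l \<sigma> mu = Some (\<sigma>', Some m')\<rbrakk> \<Longrightarrow> valid_msg n m'"

end

theory Submission imports Defs begin

definition G :: "nat set \<Rightarrow> nat set \<Rightarrow> nat \<Rightarrow> status \<Rightarrow> bool" where
  "G M Ob r s \<longleftrightarrow> (s = U \<longrightarrow> r < card Ob \<and> card Ob \<le> card M) \<and>
         (s = Mu \<longrightarrow> r + 1 = card M \<and> r = card Ob) \<and>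
         (s = Cl \<longrightarrow> r = card M \<and> r = card Ob)"

lemma arith_core:
  fixes N co cj r rj r' :: nat
  assumes co: "co = (if im then N - 1 else N)" and cj: "cj = (if jm then N - 1 else N)"
    and pos: "N > 0"
    and Gj: "(sj = U \<longrightarrow> rj < cj) \<and> (sj = Mu \<longrightarrow> rj + 1 = N \<and> rj = cj) \<and> (sj = Cl \<longrightarrow> rj = N \<and> rj = cj)"
    and r: "r < co"
    and ph: "(s' = sj \<and> r' = rj) \<or> (s' = U \<and> r' < rj)"
    and same: "ji \<Longrightarrow> rj = r \<and> sj = U \<and> jm = im"
    and jOb: "jO \<longleftrightarrow> jm \<and> \<not> ji"
    and rc: "(if s' = Cl \<and> \<not> jO \<and> r' = co then Some (Run Ob r' Cl)
     else if s' = Cl \<and> \<not> jO \<and> r' = co + 1 then Some (Run Ob (r' - 1) Mu)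
     else if s' = Mu \<and> jO \<and> r' = co then Some (Run Ob r' Mu)
     else if s' = Mu \<and> jO \<and> r' + 1 = co then Some (Run Ob (r' + 1) Cl)
     else if s' = U \<and> jO \<and> r' < r then Some (Run Ob r U)
     else if s' = U \<and> jO \<and> r \<le> r' \<and> r' + 1 < co then Some (Run Ob (r' + 1) U)
     else if s' = U \<and> jO \<and> r' + 1 = co then Some (Run Ob (r' + 1) Mu)
     else if s' = U \<and> \<not> jO \<and> r' \<le> r then Some (Run Ob r U)
     else if s' = U \<and> \<not> jO \<and> r < r' \<and> r' < co then Some (Run Ob r' U)
     else if s' = U \<and> \<not> jO \<and> r' = co then Some (Run Ob r' Mu)
     else None) = Some st'"
  shows "\<exists>r2 s2. st' = Run Ob r2 s2 \<and> (s2 = U \<longrightarrow> r2 < co) \<and>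
         (s2 = Mu \<longrightarrow> r2 + 1 = N \<and> r2 = co) \<and> (s2 = Cl \<longrightarrow> r2 = N \<and> r2 = co)"
  using assms
  apply (cases ji; cases jm; cases im; cases s'; cases sj)
  apply (simp_all split: if_splits)
  apply (auto)
  done


lemma recv_obs: "recv st m = Some st' \<Longrightarrow> obs st' = obs st"
  by (cases st; cases m; auto split: if_splits)

lemma child_obs: "child_step i l st mu = Some (st', out) \<Longrightarrow> obs st' = obs st"
  by (cases "(i, l, st, mu)" rule: child_step.cases) (auto dest: recv_obs)

definition Inv :: "nat \<Rightarrow> cstates \<Rightarrow> bool" where
  "Inv n \<sigma> \<longleftrightarrow> (\<forall>k. k \<notin> {1..n} \<longrightarrow> \<sigma> k = Init {}) \<and> (\<forall>k\<in>{1..n}. obs (\<sigma> k) \<subseteq> {1..n}) \<and>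
     (\<forall>k\<in>{1..n}. \<forall>Ob r s. \<sigma> k = Run Ob r s \<longrightarrow> consistent n \<sigma> \<and> G (Mset n \<sigma>) Ob r s)"

lemma Mset_fin: "\<forall>k\<in>{1..n}. obs (\<sigma> k) \<subseteq> {1..n} \<Longrightarrow> finite (Mset n \<sigma>)"
  unfolding Mset_def by (rule finite_subset[of _ "{1..n}"]) auto

lemma inv_step:
  assumes I: "Inv n \<sigma>" and ct: "ctrans n i l \<sigma> mu = Some (\<sigma>', out)"
  shows "Inv n \<sigma>'"
proof -
  from ct obtain st' where i: "i \<in> {1..n}" and ph: "phi n l \<sigma> mu"
    and cs: "child_step i l (\<sigma> i) mu = Some (st', out)" and s': "\<sigma>' = \<sigma>(i := st')"
    unfolding ctrans_def by (auto split: if_splits)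
  have ob: "obs st' = obs (\<sigma> i)" using child_obs[OF cs] .
  have obk: "\<And>k. obs (\<sigma>' k) = obs (\<sigma> k)" using ob s' by auto
  have MM: "Mset n \<sigma>' = Mset n \<sigma>" unfolding Mset_def using obk by simp
  have CC: "consistent n \<sigma>' = consistent n \<sigma>" unfolding consistent_def MM using obk by simp
  define M where "M = Mset n \<sigma>"
  have I1: "\<forall>k. k \<notin> {1..n} \<longrightarrow> \<sigma> k = Init {}" and I2: "\<forall>k\<in>{1..n}. obs (\<sigma> k) \<subseteq> {1..n}"
    and I3: "\<forall>k\<in>{1..n}. \<forall>Ob r s. \<sigma> k = Run Ob r s \<longrightarrow> consistent n \<sigma> \<and> G M Ob r s"
    using I unfolding Inv_def M_def by auto
  have fin: "finite M" using Mset_fin[OF I2] M_def by simp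
  have new: "\<forall>Ob r s. st' = Run Ob r s \<longrightarrow> consistent n \<sigma> \<and> G M Ob r s"
  proof (intro allI impI)
    fix Ob r s assume st: "st' = Run Ob r s"
    show "consistent n \<sigma> \<and> G M Ob r s"
    proof (cases l)
      case LInit
      then obtain Ob0 where si: "\<sigma> i = Init Ob0" and mu: "mu = None"
        using cs by (cases "\<sigma> i"; cases mu) auto
      have con: "consistent n \<sigma>" using ph LInit by simp
      hence Ob0: "Ob0 = M - {i}" "M \<noteq> {}" using i si unfolding consistent_def M_def by (metis obs.simps(1))+
      have st2: "st' = Run Ob0 0 (if Ob0 = {} then Mu else U)" using cs si mu LInit by simp
      have "G M Ob r s"
      proof (cases "Ob0 = {}")
        case True
        hence "M = {i}" using Ob0 by auto
        then show ?thesis using st st2 True by (auto simp: G_def)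
      next
        case False
        have "finite Ob0" using fin Ob0 by simp
        hence "card Ob0 > 0" using False by auto
        moreover have "card Ob0 \<le> card M" using Ob0 fin by (simp add: card_mono)
        ultimately show ?thesis using st st2 False by (auto simp: G_def)
      qed
      thus ?thesis using con by simp
    next
      case LEmit
      then obtain r0 s0 where si: "\<sigma> i = Run Ob r0 s0" and "st' = \<sigma> i"
        using cs st by (cases "\<sigma> i"; cases mu) auto
      thus ?thesis using I3 i st by auto
    next
      case LReceive
      then obtain j r' s' where mu: "mu = Some (j, r', s')" using ph by (cases mu) auto
      have rc: "recv (\<sigma> i) (j, r', s') = Some st'" using cs mu LReceive by auto
      obtain r0 s0 where si: "\<sigma> i = Run Ob r0 s0"
        using rc st recv_obs[OF rc] by (cases "\<sigma> i") auto
      have con: "consistent n \<sigma>" and Gi: "G M Ob r0 s0" using I3 i si by auto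
      show ?thesis
      proof (cases "s0 = U")
        case False
        then show ?thesis using rc si st con Gi by auto
      next
        case True
        have j: "j \<in> {1..n}" using ph LReceive mu by simp
        obtain Obj rj sj where sj: "\<sigma> j = Run Obj rj sj"
          and phj: "(s' = sj \<and> r' = rj) \<or> (s' = U \<and> r' < rj)"
          using ph LReceive mu by (cases "\<sigma> j") auto
        have Gj: "G M Obj rj sj" using I3 j sj by auto
        have Mne: "M \<noteq> {}" and Ob: "Ob = M - {i}" and Obj: "Obj = M - {j}"
          using con i j si sj unfolding consistent_def M_def by (metis obs.simps(2))+
        have co: "card Ob = (if i \<in> M then card M - 1 else card M)"
          using Ob fin by (auto simp: card_Diff_singleton)
        have cj: "card Obj = (if j \<in> M then card M - 1 else card M)"
          using Obj fin by (auto simp: card_Diff_singleton)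
        have pos: "card M > 0" using fin Mne by auto
        have coM: "card Ob \<le> card M" using co by auto
        have Gj': "(sj = U \<longrightarrow> rj < card Obj) \<and> (sj = Mu \<longrightarrow> rj + 1 = card M \<and> rj = card Obj) \<and> (sj = Cl \<longrightarrow> rj = card M \<and> rj = card Obj)"
          using Gj unfolding G_def by blast
        have r0: "r0 < card Ob" using Gi True by (simp add: G_def)
        have same: "j = i \<Longrightarrow> rj = r0 \<and> sj = U \<and> (j \<in> M) = (i \<in> M)"
          using si sj True by simp
        have jOb: "(j \<in> Ob) \<longleftrightarrow> j \<in> M \<and> \<not> j = i" using Ob by auto
        have rc2: "(if s' = Cl \<and> \<not> (j \<in> Ob) \<and> r' = card Ob then Some (Run Ob r' Cl)
     else if s' = Cl \<and> \<not> (j \<in> Ob) \<and> r' = card Ob + 1 then Some (Run Ob (r' - 1) Mu)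
     else if s' = Mu \<and> (j \<in> Ob) \<and> r' = card Ob then Some (Run Ob r' Mu)
     else if s' = Mu \<and> (j \<in> Ob) \<and> r' + 1 = card Ob then Some (Run Ob (r' + 1) Cl)
     else if s' = U \<and> (j \<in> Ob) \<and> r' < r0 then Some (Run Ob r0 U)
     else if s' = U \<and> (j \<in> Ob) \<and> r0 \<le> r' \<and> r' + 1 < card Ob then Some (Run Ob (r' + 1) U)
     else if s' = U \<and> (j \<in> Ob) \<and> r' + 1 = card Ob then Some (Run Ob (r' + 1) Mu)
     else if s' = U \<and> \<not> (j \<in> Ob) \<and> r' \<le> r0 then Some (Run Ob r0 U)
     else if s' = U \<and> \<not> (j \<in> Ob) \<and> r0 < r' \<and> r' < card Ob then Some (Run Ob r' U)
     else if s' = U \<and> \<not> (j \<in> Ob) \<and> r' = card Ob then Some (Run Ob r' Mu)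
     else None) = Some st'"
          using rc si True by simp
        from arith_core[OF co cj pos Gj' r0 phj same jOb rc2]
        obtain r2 s2 where "st' = Run Ob r2 s2" "(s2 = U \<longrightarrow> r2 < card Ob)"
          "(s2 = Mu \<longrightarrow> r2 + 1 = card M \<and> r2 = card Ob)" "(s2 = Cl \<longrightarrow> r2 = card M \<and> r2 = card Ob)"
          by blast
        thus ?thesis using st con coM by (auto simp: G_def)
      qed
    qed
  qed
  show ?thesis unfolding Inv_def MM CC
  proof (intro conjI)
    show "\<forall>k. k \<notin> {1..n} \<longrightarrow> \<sigma>' k = Init {}" using I1 i s' by auto
    show "\<forall>k\<in>{1..n}. obs (\<sigma>' k) \<subseteq> {1..n}" using I2 obk by simp
    show "\<forall>k\<in>{1..n}. \<forall>Ob r s. \<sigma>' k = Run Ob r s \<longrightarrow> consistent n \<sigma> \<and> G (Mset n \<sigma>) Ob r s"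
      using I3 new s' M_def by auto
  qed
qed

lemma inv_all:
  "valid_state n \<sigma> \<Longrightarrow> Inv n \<sigma>"
  "valid_msg n m \<Longrightarrow> True"
proof (induct rule: valid_state_valid_msg.inducts)
  case (vs_init \<sigma>)
  then show ?case unfolding Inv_def composite_initial_def by fastforce
next
  case (vs_step \<sigma> mu i l \<sigma>' out)
  then show ?case using inv_step by blast
qed simp

theorem mainTheorem3:
  fixes n :: nat and \<sigma> :: cstates and i r :: nat and Ob :: "nat set" and s :: status
  assumes "n \<ge> 1"
    and "valid_state n \<sigma>"
    and "\<not> composite_initial n \<sigma>"
    and "i \<in> {1..n}"
    and "\<sigma> i = Run Ob r s"
  shows "(s = U \<longrightarrow> r < card Ob \<and> card Ob \<le> card (Mset n \<sigma>)) \<and>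
         (s = Mu \<longrightarrow> r + 1 = card (Mset n \<sigma>) \<and> r = card Ob) \<and>
         (s = Cl \<longrightarrow> r = card (Mset n \<sigma>) \<and> r = card Ob)"
proof -
  have "Inv n \<sigma>" using inv_all(1)[OF assms(2)] .
  hence "G (Mset n \<sigma>) Ob r s" using assms(4,5) unfolding Inv_def by blast
  thus ?thesis unfolding G_def .
qed

end
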